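(* Let $g:\mathbb{R}^N\to\mathbb{R}\cup\{+\infty\}$ be proper and lower semi-continuous, and let $f:\mathbb{R}^N\to\mathbb{R}$ be continuously differentiable such that, for some $\mathbf{L}\in\mathbb{S}_{++}(N)$, the gradient of $f\circ\mathbf{L}^{-1/2}$ is $1$-Lipschitz continuous; assume $f+g$ is bounded from below. Suppose moreover that $f(x)=\frac12\langle x,\mathbf{H}x\rangle+\langle b,x\rangle+c$ with $\mathbf{H}\in\mathbb{S}_{++}(N)$, $b\in\mathbb{R}^N$, $c\in\mathbb{R}$. Let $x_k\in\mathbb{R}^N$, let $\mathbf{D}\in\mathbb{R}^{N\times R}$ have linearly independent columns, and for $\boldsymbol\beta\in\mathbb{R}^R$ put $y^{(\boldsymbol\beta)}:=x_k+\mathbf{D}\boldsymbol\beta$. Let $\mathbf{T}\in\mathbb{S}_{++}(N)$ be such that $\mathbf{M}:=\mathbf{T}-\mathbf{H}\in\mathbb{S}_{++}(N)$, and consider the problem $$\min_{x\in\mathbb{R}^N}\min_{\boldsymbol\beta\in\mathbb{R}^R}\ \ell(x;y^{(\boldsymbol\beta)})+\tfrac12\|x-y^{(\boldsymbol\beta)}\|_{\mathbf{T}}^2,\qquad \ell(x;y):=g(x)+f(y)+\langle\nabla f(y),x-y\rangle. \quad (\ast)$$ Then, for each fixed $x$, the inner minimization over $\boldsymbol\beta$ is solved by $$\boldsymbol\beta^*=(\mathbf{D}^\top\mathbf{M}\mathbf{D})^{-1}\mathbf{D}^\top\mathbf{M}(x-x_k).$$ Moreover, problem $(\ast)$ is equivalent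 to $$x_{k+1}\in\operatorname*{argmin}_{x\in\mathbb{R}^N}\ g(x)+\tfrac12\big\|x-x_k+\mathbf{Q}^{-1}\nabla f(x_k)\big\|_{\mathbf{Q}}^2,$$ (i.e. the $x$-components of minimizers of $(\ast)$ are exactly the minimizers of this problem), where $$\mathbf{Q}:=\mathbf{T}-\mathbf{U}^\top\mathbf{U}\in\mathbb{S}_{++}(N),\qquad \mathbf{U}:=(\mathbf{D}^\top\mathbf{M}\mathbf{D})^{-1/2}\mathbf{D}^\top\mathbf{M},$$ $\mathbf{U}^\top\mathbf{U}$ has rank $R$, and $$\mathbf{Q}^{-1}=\mathbf{T}^{-1}+\mathbf{T}^{-1}\mathbf{U}^\top(\mathbf{I}-\mathbf{U}\mathbf{T}^{-1}\mathbf{U}^\top)^{-1}\mathbf{U}\mathbf{T}^{-1}.$$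
   Context: $\mathbb{S}_{+}(N)$ (resp. $\mathbb{S}_{++}(N)$) denotes the set of symmetric positive semi-definite (resp. positive definite) $N\times N$ real matrices. For a matrix $\mathbf{V}$, $\|x\|_{\mathbf{V}}^2:=\langle x,\mathbf{V}x\rangle$ and $\langle x,y\rangle_{\mathbf{V}}:=\langle x,\mathbf{V}y\rangle$, with $\langle\cdot,\cdot\rangle$ the standard Euclidean inner product. $\mathbf{I}$ is the identity matrix. *)

theory Defs
  imports "HOL-Analysis.Analysis"
begin

definition psd :: "real^'n^'n \<Rightarrow> bool" where
  "psd A \<longleftrightarrow> transpose A = A \<and> (\<forall>x. 0 \<le> x \<bullet> (A *v x))"

definition spd :: "real^'n^'n \<Rightarrow> bool" where
  "spd A \<longleftrightarrow> transpose A = A \<and> (\<forall>x. x \<noteq> 0 \<longrightarrow> 0 < x \<bullet> (A *v x))"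

definition qnorm2 :: "real^'n^'n \<Rightarrow> real^'n \<Rightarrow> real" where
  "qnorm2 V x = x \<bullet> (V *v x)"

definition msqrt :: "real^'n^'n \<Rightarrow> real^'n^'n" where
  "msqrt A = (THE B. psd B \<and> B ** B = A)"

definition minvsqrt :: "real^'n^'n \<Rightarrow> real^'n^'n" where
  "minvsqrt A = matrix_inv (msqrt A)"

definition grad :: "(real^'n \<Rightarrow> real) \<Rightarrow> real^'n \<Rightarrow> real^'n" where
  "grad f x = (\<chi> i. frechet_derivative f (at x) (axis i 1))"

definition proper_fun :: "('a \<Rightarrow> ereal) \<Rightarrow> bool" where
  "proper_fun g \<longleftrightarrow> (\<forall>x. g x \<noteq> -\<infinity>) \<and> (\<exists>x. g x \<noteq> \<infinity>)"

definition lsc :: "('a::topological_space \<Rightarrow> ereal) \<Rightarrow> bool" where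
  "lsc g \<longleftrightarrow> (\<forall>x. g x \<le> Liminf (at x) g)"

end

theory Submission
  imports Defs
begin

lemma sym_dot:
  fixes A :: "real^'m^'m"
  assumes "transpose A = A"
  shows "x \<bullet> (A *v y) = (A *v x) \<bullet> y"
  by (metis assms dot_lmul_matrix transpose_matrix_vector)

lemma eigen_exists:
  fixes A :: "real^'m^'m"
  assumes sym: "transpose A = A" and S: "subspace S" and inv: "\<forall>x\<in>S. A *v x \<in> S"
    and ne: "S \<noteq> {0}"
  shows "\<exists>v\<in>S. norm v = 1 \<and> A *v v = (v \<bullet> (A *v v)) *\<^sub>R v"
proof -
  let ?q = "\<lambda>x. x \<bullet> (A *v x)"
  define K where "K = S \<inter> sphere 0 1"
  have "closed S" using S closed_subspace by blast
  hence cK: "compact K" unfolding K_def by (simp add: closed_Int_compact)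
  obtain s where s: "s \<in> S" "s \<noteq> 0" using ne S subspace_0 by blast
  have "(1 / norm s) *\<^sub>R s \<in> K" using s S unfolding K_def
    by (simp add: subspace_scale)
  hence neK: "K \<noteq> {}" by blast
  have cont: "continuous_on K ?q"
    by (intro continuous_intros)
  obtain v where v: "v \<in> K" and vmax: "\<forall>x\<in>K. ?q x \<le> ?q v"
    using continuous_attains_sup[OF cK neK cont] by blast
  define \<mu> where "\<mu> = ?q v"
  have vS: "v \<in> S" and nv: "norm v = 1" using v unfolding K_def by auto
  have vv: "v \<bullet> v = 1" using nv by (simp add: norm_eq_1)
  have bound: "?q x \<le> \<mu> * (x \<bullet> x)" if "x \<in> S" for x
  proof (cases "x = 0")
    case True then show ?thesis by simp
  next
    case False
    let ?u = "(1 / norm x) *\<^sub>R x"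
    have "?u \<in> K" using that False S unfolding K_def by (simp add: subspace_scale)
    hence "?q ?u \<le> \<mu>" using vmax \<mu>_def by auto
    moreover have "?q ?u = ?q x / (norm x)^2"
      by (simp add: matrix_vector_mult_scaleR power2_eq_square)
    ultimately have "?q x / (norm x)^2 \<le> \<mu>" by simp
    moreover have "(norm x)^2 > 0" using False by simp
    ultimately have "?q x \<le> \<mu> * (norm x)^2" by (simp add: divide_le_eq)
    then show ?thesis by (simp add: power2_norm_eq_inner)
  qed
  define w where "w = A *v v - \<mu> *\<^sub>R v"
  have wS: "w \<in> S" unfolding w_def using inv vS S by (simp add: subspace_diff subspace_scale)
  have wv: "w \<bullet> v = 0" unfolding w_def \<mu>_def using vv
    by (simp add: inner_diff_left inner_diff_right inner_commute)
  have wAv: "w \<bullet> (A *v v) = w \<bullet> w"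
    unfolding w_def using vv \<mu>_def by (simp add: inner_diff_right inner_diff_left wv[unfolded w_def] inner_commute)
  have symw: "v \<bullet> (A *v w) = w \<bullet> (A *v v)" using sym_dot[OF sym, of v w] by (simp add: inner_commute)
  define a where "a = w \<bullet> w"
  define c where "c = ?q w - \<mu> * (w \<bullet> w)"
  have ineq: "2 * t * a + t^2 * c \<le> 0" for t
  proof -
    have "v + t *\<^sub>R w \<in> S" using vS wS S by (simp add: subspace_add subspace_scale)
    from bound[OF this]
    have "?q (v + t *\<^sub>R w) \<le> \<mu> * ((v + t *\<^sub>R w) \<bullet> (v + t *\<^sub>R w))" .
    moreover have "?q (v + t *\<^sub>R w) = \<mu> + 2 * t * a + t^2 * ?q w"
      using symw wAv unfolding a_def \<mu>_def
      by (simp add: matrix_vector_right_distrib matrix_vector_mult_scaleR inner_add_left inner_add_right power2_eq_square algebra_simps)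
    moreover have "(v + t *\<^sub>R w) \<bullet> (v + t *\<^sub>R w) = 1 + t^2 * (w \<bullet> w)"
      using vv wv by (simp add: inner_add_left inner_add_right inner_commute power2_eq_square)
    ultimately have "\<mu> + 2 * t * a + t^2 * ?q w \<le> \<mu> * (1 + t^2 * (w \<bullet> w))"
      by (simp only:)
    then show ?thesis unfolding c_def by (simp add: algebra_simps)
  qed
  have "a = 0"
  proof (rule ccontr)
    assume "a \<noteq> 0"
    hence apos: "a > 0" unfolding a_def by simp
    define t where "t = a / (\<bar>c\<bar> + 1)"
    have tpos: "t > 0" using apos unfolding t_def by simp
    have "t * \<bar>c\<bar> < a" unfolding t_def using apos
      by (simp add: field_simps)
    hence h1: "t * (t * \<bar>c\<bar>) < t * a" using tpos by simp
    have "t^2 * (- \<bar>c\<bar>) \<le> t^2 * c" by (rule mult_left_mono) auto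
    hence h2: "t^2 * c \<ge> - (t * (t * \<bar>c\<bar>))" by (simp add: power2_eq_square)
    have h3: "t * a > 0" using tpos apos by simp
    have "2 * t * a + t^2 * c > 0" using h1 h2 h3 by linarith
    with ineq[of t] show False by simp
  qed
  hence "w = 0" unfolding a_def by simp
  hence "A *v v = \<mu> *\<^sub>R v" unfolding w_def by simp
  then show ?thesis using vS nv \<mu>_def by blast
qed


lemma spectral_sub:
  fixes A :: "real^'m^'m"
  assumes sym: "transpose A = A"
  shows "subspace S \<Longrightarrow> (\<forall>x\<in>S. A *v x \<in> S) \<Longrightarrow>
    (\<exists>B. B \<subseteq> S \<and> finite B \<and> pairwise orthogonal B \<and> (\<forall>b\<in>B. norm b = 1 \<and> A *v b = (b \<bullet> (A *v b)) *\<^sub>R b)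
        \<and> span B = S)"
proof (induction "dim S" arbitrary: S rule: less_induct)
  case less
  show ?case
  proof (cases "S = {0}")
    case True
    then show ?thesis by (intro exI[of _ "{}"]) auto
  next
    case False
    obtain v where vS: "v \<in> S" and nv: "norm v = 1" and Av: "A *v v = (v \<bullet> (A *v v)) *\<^sub>R v"
      using eigen_exists[OF sym less.prems False] by blast
    define \<mu> where "\<mu> = v \<bullet> (A *v v)"
    define S' where "S' = {x\<in>S. v \<bullet> x = 0}"
    have sub': "subspace S'" unfolding S'_def using less.prems(1)
      by (auto simp: subspace_def inner_add_right)
    have inv': "\<forall>x\<in>S'. A *v x \<in> S'"
    proof
      fix x assume "x \<in> S'"
      hence "x \<in> S" "v \<bullet> x = 0" unfolding S'_def by auto
      moreover have "v \<bullet> (A *v x) = (A *v v) \<bullet> x" using sym_dot[OF sym] by blast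
      moreover have "(A *v v) \<bullet> x = \<mu> * (v \<bullet> x)" using Av unfolding \<mu>_def
        by (metis inner_scaleR_left)
      ultimately show "A *v x \<in> S'" unfolding S'_def using less.prems(2) by simp
    qed
    have vv: "v \<bullet> v = 1" using nv by (simp add: norm_eq_1)
    have "v \<notin> S'" using vv unfolding S'_def by auto
    moreover have "S' \<subseteq> S" unfolding S'_def by auto
    ultimately have "S' \<subset> S" using vS by blast
    hence "span S' \<subset> span S" using sub' less.prems(1) by (simp add: span_eq_iff[THEN iffD2])
    hence "dim S' < dim S" by (rule dim_psubset)
    from less.hyps[OF this sub' inv'] obtain B' where B': "B' \<subseteq> S'" "finite B'" "pairwise orthogonal B'"
      "\<forall>b\<in>B'. norm b = 1 \<and> A *v b = (b \<bullet> (A *v b)) *\<^sub>R b" "span B' = S'" by blast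
    have vB': "v \<notin> B'" using B'(1) vv unfolding S'_def by auto
    show ?thesis
    proof (intro exI[of _ "insert v B'"] conjI)
      show "insert v B' \<subseteq> S" using B'(1) vS unfolding S'_def by auto
      show "finite (insert v B')" using B'(2) by simp
      have "\<forall>y\<in>B'. orthogonal v y" using B'(1) unfolding S'_def orthogonal_def by blast
      then show "pairwise orthogonal (insert v B')"
        using B'(3) orthogonal_commute unfolding pairwise_insert by blast
      show "\<forall>b\<in>insert v B'. norm b = 1 \<and> A *v b = (b \<bullet> (A *v b)) *\<^sub>R b" using B'(4) nv Av by auto
      show "span (insert v B') = S"
      proof
        have "insert v B' \<subseteq> S" using B'(1) vS unfolding S'_def by blast
        then show "span (insert v B') \<subseteq> S" using less.prems(1) by (rule span_minimal)
        show "S \<subseteq> span (insert v B')"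
        proof
          fix x assume xS: "x \<in> S"
          have "x - (v \<bullet> x) *\<^sub>R v \<in> S'" unfolding S'_def using xS vS less.prems(1) vv
            by (simp add: subspace_diff subspace_scale inner_diff_right)
          hence "x - (v \<bullet> x) *\<^sub>R v \<in> span B'" using B'(5) by simp
          hence "x - (v \<bullet> x) *\<^sub>R v \<in> span (insert v B')" by (meson span_mono subset_insertI subsetD)
          moreover have "(v \<bullet> x) *\<^sub>R v \<in> span (insert v B')" by (simp add: span_base span_scale)
          ultimately have "(x - (v \<bullet> x) *\<^sub>R v) + (v \<bullet> x) *\<^sub>R v \<in> span (insert v B')"
            by (rule span_add)
          then show "x \<in> span (insert v B')" by simp
        qed
      qed
    qed
  qed
qed

lemma spectral:
  fixes A :: "real^'m^'m"
  assumes sym: "transpose A = A"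
  shows "\<exists>B. finite B \<and> pairwise orthogonal B \<and> (\<forall>b\<in>B. norm b = 1 \<and> A *v b = (b \<bullet> (A *v b)) *\<^sub>R b)
        \<and> span B = UNIV"
  using spectral_sub[OF sym, of UNIV] by auto


lemma sym_from_dot:
  fixes M :: "real^'m^'m"
  assumes "\<forall>x y. y \<bullet> (M *v x) = x \<bullet> (M *v y)"
  shows "transpose M = M"
proof -
  have e: "M $ i $ j = axis i 1 \<bullet> (M *v axis j 1)" for i j
    by (simp add: matrix_vector_mult_basis inner_axis' column_def)
  show ?thesis unfolding transpose_def
    by (simp add: vec_eq_iff e) (metis assms)
qed

lemma sqrt_on_eig:
  fixes B :: "real^'m^'m"
  assumes pB: "psd B" and e: "B *v (B *v b) = l *\<^sub>R b" and l: "l \<ge> 0"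
  shows "B *v b = sqrt l *\<^sub>R b"
proof -
  define s where "s = sqrt l"
  have s0: "s \<ge> 0" and ss: "s * s = l" using l unfolding s_def by (auto simp: real_sqrt_mult_self)
  have sym: "transpose B = B" using pB unfolding psd_def by simp
  define w where "w = B *v b - s *\<^sub>R b"
  have "B *v w + s *\<^sub>R w = 0" unfolding w_def using e ss
    by (simp add: matrix_vector_mult_diff_distrib matrix_vector_mult_scaleR algebra_simps scaleR_diff_right)
  hence "w \<bullet> (B *v w + s *\<^sub>R w) = 0" by simp
  hence z: "w \<bullet> (B *v w) + s * (w \<bullet> w) = 0" by (simp add: inner_add_right)
  have p1: "w \<bullet> (B *v w) \<ge> 0" using pB unfolding psd_def by simp
  show ?thesis
  proof (cases "s = 0")
    case False
    hence "s > 0" using s0 by simp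
    hence "w \<bullet> w = 0" using z p1 by (smt (verit) inner_ge_zero mult_pos_pos mult_eq_0_iff)
    thus ?thesis unfolding w_def s_def by simp
  next
    case True
    hence "l = 0" using ss by simp
    hence "B *v (B *v b) = 0" using e by simp
    hence "(B *v b) \<bullet> (B *v b) = 0" using sym_dot[OF sym, of b "B *v b"] by simp
    thus ?thesis using True unfolding s_def by simp
  qed
qed

lemma sqrt_ex1:
  fixes A :: "real^'m^'m"
  assumes pA: "psd A"
  shows "\<exists>!B. psd B \<and> B ** B = A"
proof -
  have sym: "transpose A = A" using pA unfolding psd_def by simp
  obtain Bs where fin: "finite Bs" and orth: "pairwise orthogonal Bs"
    and eig: "\<forall>b\<in>Bs. norm b = 1 \<and> A *v b = (b \<bullet> (A *v b)) *\<^sub>R b" and sp: "span Bs = UNIV"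
    using spectral[OF sym] by blast
  define lam where "lam b = b \<bullet> (A *v b)" for b
  have lam0: "lam b \<ge> 0" for b using pA unfolding psd_def lam_def by simp
  have Ab: "A *v b = lam b *\<^sub>R b" if "b \<in> Bs" for b using eig that unfolding lam_def by simp
  have on: "b \<bullet> b' = (if b = b' then 1 else 0)" if "b \<in> Bs" "b' \<in> Bs" for b b'
    using orth eig that unfolding pairwise_def orthogonal_def by (auto simp: norm_eq_1)
  define h where "h x = (\<Sum>b\<in>Bs. (sqrt (lam b) * (b \<bullet> x)) *\<^sub>R b)" for x
  have lin: "linear h"
    unfolding linear_iff h_def
    by (simp add: inner_add_right scaleR_add_left sum.distrib algebra_simps scaleR_sum_right)
  define Bm where "Bm = matrix h"
  have Bmv: "Bm *v x = h x" for x unfolding Bm_def using lin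
    by (simp add: matrix_works linear_matrix_vector_mul_eq)
  have hb: "h b = sqrt (lam b) *\<^sub>R b" if "b \<in> Bs" for b
  proof -
    have "h b = (\<Sum>b'\<in>Bs. if b' = b then sqrt (lam b) *\<^sub>R b else 0)"
      unfolding h_def by (rule sum.cong) (auto simp: on that)
    also have "\<dots> = sqrt (lam b) *\<^sub>R b" using that fin by (simp add: sum.delta')
    finally show ?thesis .
  qed
  have dot: "y \<bullet> h x = (\<Sum>b\<in>Bs. sqrt (lam b) * (b \<bullet> x) * (b \<bullet> y))" for x y
    unfolding h_def by (simp add: inner_sum_right inner_commute mult.assoc)
  have psdBm: "psd Bm"
    unfolding psd_def
  proof
    show "transpose Bm = Bm"
      by (rule sym_from_dot) (simp add: Bmv dot mult.commute mult.left_commute)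
    show "\<forall>x. 0 \<le> x \<bullet> (Bm *v x)"
      by (auto simp: Bmv dot mult.assoc lam0 intro!: sum_nonneg mult_nonneg_nonneg zero_le_square)
  qed
  have Bm2: "Bm ** Bm = A"
  proof -
    have "Bm *v (Bm *v x) = A *v x" for x
    proof (rule linear_eq_on_span[of "\<lambda>x. Bm *v (Bm *v x)" "\<lambda>x. A *v x" Bs])
      show "linear (\<lambda>x. Bm *v (Bm *v x))" by (simp add: linear_compose[unfolded o_def])
      show "linear ((*v) A)" by simp
      show "x \<in> span Bs" using sp by simp
      fix b assume "b \<in> Bs"
      then show "Bm *v (Bm *v b) = A *v b" using Ab lam0
        by (simp add: Bmv hb matrix_vector_mult_scaleR[symmetric] linear_cmul[OF lin] real_sqrt_mult_self)
    qed
    thus ?thesis by (simp add: matrix_eq matrix_vector_mul_assoc)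
  qed
  show ?thesis
  proof (rule ex1I[of _ Bm])
    show "psd Bm \<and> Bm ** Bm = A" using psdBm Bm2 by simp
    fix B' assume B': "psd B' \<and> B' ** B' = A"
    have "B' *v x = Bm *v x" for x
    proof (rule linear_eq_on_span[of "\<lambda>x. B' *v x" "\<lambda>x. Bm *v x" Bs])
      show "linear ((*v) B')" by simp
      show "linear ((*v) Bm)" by simp
      show "x \<in> span Bs" using sp by simp
      fix b assume b: "b \<in> Bs"
      have "B' *v (B' *v b) = lam b *\<^sub>R b" using B' Ab[OF b] by (simp add: matrix_vector_mul_assoc)
      then show "B' *v b = Bm *v b" using sqrt_on_eig[of B' b "lam b"] B' lam0 b by (simp add: Bmv hb)
    qed
    then show "B' = Bm" by (simp add: matrix_eq)
  qed
qed

lemma msqrt_props: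
  fixes A :: "real^'m^'m"
  assumes "psd A"
  shows "psd (msqrt A) \<and> msqrt A ** msqrt A = A"
  unfolding msqrt_def using theI'[OF sqrt_ex1[OF assms]] .


lemma minv:
  fixes A :: "real^'m^'m"
  assumes "invertible A"
  shows "A ** matrix_inv A = mat 1 \<and> matrix_inv A ** A = mat 1"
  using assms unfolding invertible_def matrix_inv_def by (rule someI_ex)

lemma minv_v:
  fixes A :: "real^'m^'m"
  assumes "invertible A"
  shows "A *v (matrix_inv A *v x) = x" "matrix_inv A *v (A *v x) = x"
  using minv[OF assms] by (simp_all add: matrix_vector_mul_assoc)

lemma inv_of_ker:
  fixes A :: "real^'m^'m"
  assumes "\<forall>x. A *v x = 0 \<longrightarrow> x = 0"
  shows "invertible A"
  using assms by (simp add: invertible_left_inverse matrix_left_invertible_ker)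

lemma spd_inv:
  fixes A :: "real^'m^'m"
  assumes "spd A"
  shows "invertible A"
proof (rule inv_of_ker, intro allI impI)
  fix x assume "A *v x = 0"
  hence "x \<bullet> (A *v x) = 0" by simp
  thus "x = 0" using assms unfolding spd_def by force
qed

lemma grad_quad:
  fixes H :: "real^'n^'n"
  assumes sym: "transpose H = H" and fq: "\<forall>x. f x = 1/2 * (x \<bullet> (H *v x)) + b \<bullet> x + c"
  shows "grad f z = H *v z + b"
proof -
  have fe: "f = (\<lambda>x. 1/2 * (x \<bullet> (H *v x)) + b \<bullet> x + c)" using fq by auto
  have d: "(f has_derivative (\<lambda>h. 1/2 * (h \<bullet> (H *v z) + z \<bullet> (H *v h)) + b \<bullet> h)) (at z)"
    unfolding fe
    by (auto intro!: derivative_eq_intros bounded_linear.has_derivative[OF matrix_vector_mul_bounded_linear]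
        simp: algebra_simps)
  have fd: "frechet_derivative f (at z) = (\<lambda>h. 1/2 * (h \<bullet> (H *v z) + z \<bullet> (H *v h)) + b \<bullet> h)"
    using frechet_derivative_at[OF d] by simp
  have s: "z \<bullet> (H *v h) = h \<bullet> (H *v z)" for h using sym_dot[OF sym, of z h] by (simp add: inner_commute)
  have "axis i 1 \<bullet> (H *v z) = (H *v z) $ i" for i by (simp add: inner_axis')
  moreover have "b \<bullet> axis i 1 = b $ i" for i by (simp add: inner_axis)
  ultimately show ?thesis unfolding grad_def fd
    by (simp add: vec_eq_iff s)
qed


lemma dot_transpose:
  fixes A :: "real^'a^'b"
  shows "x \<bullet> (A *v y) = (transpose A *v x) \<bullet> y"
  by (metis dot_lmul_matrix transpose_matrix_vector)

lemma qexp: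
  fixes Q :: "real^'m^'m"
  assumes "transpose Q = Q"
  shows "(u + w) \<bullet> (Q *v (u + w)) = u \<bullet> (Q *v u) + 2 * (w \<bullet> (Q *v u)) + w \<bullet> (Q *v w)"
proof -
  have "u \<bullet> (Q *v w) = w \<bullet> (Q *v u)" using sym_dot[OF assms, of u w] by (simp add: inner_commute)
  then show ?thesis by (simp add: matrix_vector_right_distrib inner_add_left inner_add_right)
qed

lemma quad_taylor:
  fixes H :: "real^'n^'n"
  assumes sym: "transpose H = H" and fq: "\<forall>x. f x = 1/2 * (x \<bullet> (H *v x)) + b \<bullet> x + c"
  shows "f x = f y + (H *v y + b) \<bullet> (x - y) + 1/2 * ((x - y) \<bullet> (H *v (x - y)))"
proof -
  have e: "x = y + (x - y)" by simp
  have "x \<bullet> (H *v x) = y \<bullet> (H *v y) + 2 * ((x - y) \<bullet> (H *v y)) + (x - y) \<bullet> (H *v (x - y))"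
    by (subst (1 2) e, rule qexp[OF sym])
  moreover have "b \<bullet> x = b \<bullet> y + b \<bullet> (x - y)" by (simp add: inner_diff_right)
  ultimately show ?thesis using fq by (simp add: inner_add_left inner_commute algebra_simps)
qed


theorem mainTheorem1:
  fixes g :: "real^'n \<Rightarrow> ereal"
    and f :: "real^'n \<Rightarrow> real"
    and L H T :: "real^'n^'n"
    and b xk :: "real^'n"
    and c :: real
    and D :: "real^'r^'n"
  assumes g_proper: "proper_fun g"
    and g_lsc: "lsc g"
    and f_diff: "\<forall>x. f differentiable (at x)"
    and f_C1: "continuous_on UNIV (grad f)"
    and L_spd: "spd L"
    and f_Lip: "1-lipschitz_on UNIV (grad (\<lambda>z. f (minvsqrt L *v z)))"
    and bdd_below: "\<exists>m::real. \<forall>x. ereal m \<le> ereal (f x) + g x"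
    and f_quad: "\<forall>x. f x = 1/2 * (x \<bullet> (H *v x)) + b \<bullet> x + c"
    and H_spd: "spd H"
    and D_indep: "inj (\<lambda>j. column j D) \<and> independent (columns D)"
    and T_spd: "spd T"
    and M_spd: "spd (T - H)"
  defines "Phi \<equiv> (\<lambda>x (\<beta>::real^'r). g x + ereal (f (xk + D *v \<beta>)
                 + grad f (xk + D *v \<beta>) \<bullet> (x - (xk + D *v \<beta>)))
               + ereal (1/2 * qnorm2 T (x - (xk + D *v \<beta>))))"
    and "U \<equiv> minvsqrt (transpose D ** (T - H) ** D) ** transpose D ** (T - H)"
  shows "(\<forall>x. \<forall>\<beta>. Phi x (matrix_inv (transpose D ** (T - H) ** D) ** transpose D ** (T - H) *v (x - xk))
                    \<le> Phi x \<beta>)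
       \<and> (\<forall>x. (\<exists>\<beta>. \<forall>x' \<beta>'. Phi x \<beta> \<le> Phi x' \<beta>') \<longleftrightarrow>
              (\<forall>x'. g x + ereal (1/2 * qnorm2 (T - transpose U ** U)
                          (x - xk + matrix_inv (T - transpose U ** U) *v grad f xk))
                    \<le> g x' + ereal (1/2 * qnorm2 (T - transpose U ** U)
                          (x' - xk + matrix_inv (T - transpose U ** U) *v grad f xk))))
       \<and> spd (T - transpose U ** U)
       \<and> rank (transpose U ** U) = CARD('r)
       \<and> invertible (mat 1 - U ** matrix_inv T ** transpose U)
       \<and> matrix_inv (T - transpose U ** U) = matrix_inv T + matrix_inv T ** transpose U
            ** matrix_inv (mat 1 - U ** matrix_inv T ** transpose U) ** U ** matrix_inv T"
proof -
  note assoc = matrix_vector_mul_assoc[symmetric]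
  define M where "M = T - H"
  define N where "N = transpose D ** M"
  define A where "A = N ** D"
  define Ai where "Ai = matrix_inv A"
  define S where "S = msqrt A"
  define Si where "Si = matrix_inv S"
  have symH: "transpose H = H" using H_spd unfolding spd_def by simp
  have symT: "transpose T = T" using T_spd unfolding spd_def by simp
  have symM: "transpose M = M" using M_spd unfolding spd_def M_def by simp
  have posM: "x \<noteq> 0 \<Longrightarrow> 0 < x \<bullet> (M *v x)" for x using M_spd unfolding spd_def M_def by simp
  have psdM: "0 \<le> x \<bullet> (M *v x)" for x using posM[of x] by (cases "x = 0") auto
  have Minj: "M *v x = 0 \<Longrightarrow> x = 0" for x using posM[of x] by auto
  have "rank D = CARD('r)"
  proof -
    have "columns D = range (\<lambda>j. column j D)" unfolding columns_def by auto
    hence "card (columns D) = CARD('r)" using D_indep by (simp add: card_image)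
    moreover have "dim (columns D) = card (columns D)" using D_indep by (simp add: dim_eq_card_independent)
    ultimately show ?thesis by (simp add: column_rank_def)
  qed
  hence injD: "inj ((*v) D)" by (simp add: full_rank_injective)
  have Dinj: "D *v w = 0 \<Longrightarrow> w = 0" for w using injD by (metis injD inj_eq matrix_vector_mult_0_right)
  have Nv: "N *v x = transpose D *v (M *v x)" for x unfolding N_def by (simp add: assoc)
  have trN: "transpose N = M ** D" unfolding N_def by (simp add: matrix_transpose_mul symM)
  have NTv: "transpose N *v w = M *v (D *v w)" for w unfolding trN by (simp add: assoc)
  have Av: "A *v w = transpose D *v (M *v (D *v w))" for w unfolding A_def by (simp add: assoc Nv)
  have symA: "transpose A = A" unfolding A_def by (simp add: matrix_transpose_mul trN matrix_mul_assoc N_def symM)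
  have Adot: "w \<bullet> (A *v w) = (D *v w) \<bullet> (M *v (D *v w))" for w
    unfolding Av dot_transpose[of w "transpose D"] transpose_transpose by (rule refl)
  have spdA: "spd A" unfolding spd_def
  proof (intro conjI allI impI)
    show "transpose A = A" by (rule symA)
    fix w :: "real^'r" assume "w \<noteq> 0"
    hence "D *v w \<noteq> 0" using Dinj by blast
    thus "0 < w \<bullet> (A *v w)" using posM Adot by simp
  qed
  have invA: "invertible A" by (rule spd_inv[OF spdA])
  have psdA: "psd A" using spdA unfolding spd_def psd_def
    by (metis inner_zero_left matrix_vector_mult_0_right order_le_less)
  have Sprops: "psd S" "S ** S = A" using msqrt_props[OF psdA] unfolding S_def by auto
  have symS: "transpose S = S" using Sprops unfolding psd_def by simp
  have invS: "invertible S"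
  proof -
    have "S ** (S ** Ai) = mat 1" using minv[OF invA] unfolding Ai_def by (simp add: matrix_mul_assoc Sprops)
    thus ?thesis by (auto simp: invertible_right_inverse)
  qed
  have SSi: "S ** Si = mat 1" "Si ** S = mat 1" using minv[OF invS] unfolding Si_def by auto
  have symSi: "transpose Si = Si"
  proof -
    have "transpose Si ** S = mat 1"
      by (metis SSi(1) matrix_transpose_mul symS transpose_mat)
    have "transpose Si = transpose Si ** (S ** Si)" using SSi by simp
    also have "\<dots> = (transpose Si ** S) ** Si" by (rule matrix_mul_assoc)
    finally show ?thesis using \<open>transpose Si ** S = mat 1\<close> by simp
  qed
  have AAi: "A *v (Ai *v y) = y" "Ai *v (A *v y) = y" for y using minv_v[OF invA] unfolding Ai_def by auto
  have SiSi: "Si *v (Si *v y) = Ai *v y" for y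
  proof -
    have "A *v (Si *v (Si *v y)) = y" unfolding Sprops(2)[symmetric]
      by (simp add: assoc[symmetric] matrix_mul_assoc) (simp add: matrix_mul_assoc[symmetric] SSi)
    hence "Ai *v (A *v (Si *v (Si *v y))) = Ai *v y" by simp
    thus ?thesis using AAi by simp
  qed
  have U_eq: "U = Si ** N"
  proof -
    have "U = Si ** transpose D ** M"
      unfolding U_def minvsqrt_def M_def A_def N_def S_def Si_def by (rule refl)
    thus ?thesis unfolding N_def by (simp add: matrix_mul_assoc)
  qed
  define K where "K = transpose U ** U"
  define bs where "bs v = Ai *v (N *v v)" for v
  have Uv: "U *v x = Si *v (N *v x)" for x by (simp add: U_eq assoc)
  have UTv: "transpose U *v y = M *v (D *v (Si *v y))" for y
    by (simp add: U_eq matrix_transpose_mul symSi assoc NTv[symmetric])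
  have Kv: "K *v x = M *v (D *v bs x)" for x
    unfolding K_def bs_def matrix_vector_mul_assoc[symmetric] UTv Uv SiSi by (rule refl)
  have Abs: "A *v bs v = N *v v" for v unfolding bs_def by (simp add: AAi)
  have symK: "transpose K = K" unfolding K_def by (simp add: matrix_transpose_mul)
  have orth: "(v - D *v bs v) \<bullet> (M *v (D *v \<delta>)) = 0" for v \<delta>
  proof -
    have "(v - D *v bs v) \<bullet> (M *v (D *v \<delta>)) = (transpose D *v (M *v (v - D *v bs v))) \<bullet> \<delta>"
      using sym_dot[OF symM] dot_transpose by metis
    also have "transpose D *v (M *v (v - D *v bs v)) = N *v v - A *v bs v"
      by (simp add: Nv Av matrix_vector_mult_diff_distrib)
    finally show ?thesis by (simp add: Abs)
  qed
  have L3: "(v - D *v \<beta>) \<bullet> (M *v (v - D *v \<beta>)) = (v \<bullet> (M *v v) - v \<bullet> (K *v v))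
      + (D *v (bs v - \<beta>)) \<bullet> (M *v (D *v (bs v - \<beta>)))" for v \<beta>
  proof -
    have e: "v - D *v \<beta> = (v - D *v bs v) + D *v (bs v - \<beta>)" by (simp add: matrix_vector_mult_diff_distrib)
    have "(v - D *v \<beta>) \<bullet> (M *v (v - D *v \<beta>)) = (v - D *v bs v) \<bullet> (M *v (v - D *v bs v))
        + (D *v (bs v - \<beta>)) \<bullet> (M *v (D *v (bs v - \<beta>)))"
    proof -
      have "(D *v (bs v - \<beta>)) \<bullet> (M *v (v - D *v bs v)) = (v - D *v bs v) \<bullet> (M *v (D *v (bs v - \<beta>)))"
        using sym_dot[OF symM, of "D *v (bs v - \<beta>)" "v - D *v bs v"] by (simp add: inner_commute)
      then show ?thesis unfolding e qexp[OF symM] using orth[of v "bs v - \<beta>"] by simp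
    qed
    moreover have "(v - D *v bs v) \<bullet> (M *v (v - D *v bs v)) = v \<bullet> (M *v v) - v \<bullet> (K *v v)"
    proof -
      have "(v - D *v bs v) \<bullet> (M *v (v - D *v bs v)) = (v - D *v bs v) \<bullet> (M *v v)"
        using orth[of v "bs v"] by (simp add: matrix_vector_mult_diff_distrib inner_diff_right)
      also have "\<dots> = v \<bullet> (M *v v) - (D *v bs v) \<bullet> (M *v v)" by (simp add: inner_diff_left)
      also have "(D *v bs v) \<bullet> (M *v v) = v \<bullet> (K *v v)"
        unfolding Kv using sym_dot[OF symM, of v "D *v bs v"] by (simp add: inner_commute)
      finally show ?thesis .
    qed
    ultimately show ?thesis by simp
  qed
  have MK0: "0 \<le> v \<bullet> (M *v v) - v \<bullet> (K *v v)" for v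
    using L3[of v "bs v"] psdM[of "v - D *v bs v"] by simp
  define Q where "Q = T - K"
  have Qv: "Q *v x = H *v x + M *v x - K *v x" for x
    unfolding Q_def M_def by (simp add: matrix_vector_mult_diff_rdistrib)
  have symQ: "transpose Q = Q" unfolding Q_def using symT symK by (simp add: transpose_def vec_eq_iff)
  have spdQ: "spd Q" unfolding spd_def
  proof (intro conjI allI impI)
    show "transpose Q = Q" by (rule symQ)
    fix x :: "real^'n" assume "x \<noteq> 0"
    hence "0 < x \<bullet> (H *v x)" using H_spd unfolding spd_def by simp
    moreover have "x \<bullet> (Q *v x) = x \<bullet> (H *v x) + (x \<bullet> (M *v x) - x \<bullet> (K *v x))"
      by (simp add: Qv inner_add_right inner_diff_right)
    ultimately show "0 < x \<bullet> (Q *v x)" using MK0[of x] by simp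
  qed
  have invQ: "invertible Q" by (rule spd_inv[OF spdQ])
  define Qi where "Qi = matrix_inv Q"
  have QQi: "Q *v (Qi *v y) = y" for y using minv_v[OF invQ] unfolding Qi_def by auto
  have Qinj: "Q *v x = 0 \<Longrightarrow> x = 0" for x using spdQ unfolding spd_def by force
  define G where "G = grad f xk"
  have gradf: "grad f z = H *v z + b" for z by (rule grad_quad[OF symH f_quad])
  define Psr where "Psr x = 1/2 * qnorm2 Q (x - xk + Qi *v G)" for x
  define C where "C = f xk - 1/2 * ((Qi *v G) \<bullet> G)"
  define e where "e x \<beta> = (D *v (bs (x - xk) - \<beta>)) \<bullet> (M *v (D *v (bs (x - xk) - \<beta>)))" for x \<beta>
  have e0: "e x \<beta> \<ge> 0" for x \<beta> unfolding e_def by (rule psdM)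
  have ebs: "e x (bs (x - xk)) = 0" for x unfolding e_def by simp
  have realpart: "f (xk + D *v \<beta>) + grad f (xk + D *v \<beta>) \<bullet> (x - (xk + D *v \<beta>))
      + 1/2 * qnorm2 T (x - (xk + D *v \<beta>)) = Psr x + C + 1/2 * e x \<beta>" for x \<beta>
  proof -
    define y where "y = xk + D *v \<beta>"
    define v where "v = x - xk"
    have xy: "x - y = v - D *v \<beta>" unfolding y_def v_def by simp
    have "f (xk + D *v \<beta>) + grad f (xk + D *v \<beta>) \<bullet> (x - (xk + D *v \<beta>))
      + 1/2 * qnorm2 T (x - (xk + D *v \<beta>)) = f x + 1/2 * ((x - y) \<bullet> (M *v (x - y)))"
      unfolding y_def[symmetric] qnorm2_def gradf quad_taylor[OF symH f_quad, of x y] M_def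
      by (simp add: matrix_vector_mult_diff_rdistrib inner_diff_right algebra_simps)
    also have "\<dots> = f x + 1/2 * (v \<bullet> (M *v v) - v \<bullet> (K *v v)) + 1/2 * e x \<beta>"
      unfolding xy L3 e_def v_def by (simp add: algebra_simps)
    also have "f x = f xk + G \<bullet> v + 1/2 * (v \<bullet> (H *v v))"
      unfolding quad_taylor[OF symH f_quad, of x xk] G_def gradf v_def by (simp add: inner_commute)
    also have "Psr x = 1/2 * (v \<bullet> (Q *v v)) + G \<bullet> v + 1/2 * ((Qi *v G) \<bullet> G)"
    proof -
      have "Psr x = 1/2 * ((v + Qi *v G) \<bullet> (Q *v (v + Qi *v G)))" unfolding Psr_def qnorm2_def v_def
        by (simp add: diff_add_eq)
      also have "\<dots> = 1/2 * (v \<bullet> (Q *v v) + 2 * ((Qi *v G) \<bullet> (Q *v v)) + (Qi *v G) \<bullet> (Q *v (Qi *v G)))"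
        by (simp add: qexp[OF symQ])
      also have "(Qi *v G) \<bullet> (Q *v v) = G \<bullet> v" using sym_dot[OF symQ, of "Qi *v G" v] by (simp add: QQi)
      finally show ?thesis by (simp add: QQi inner_commute algebra_simps)
    qed
    ultimately show ?thesis unfolding C_def
      by (simp add: Qv inner_add_right inner_diff_right algebra_simps)
  qed
  define Ps where "Ps x = g x + ereal (Psr x)" for x
  have PhiEq: "Phi x \<beta> = Ps x + ereal (C + 1/2 * e x \<beta>)" for x \<beta>
  proof -
    have "Phi x \<beta> = g x + ereal (Psr x + C + 1/2 * e x \<beta>)"
      unfolding Phi_def realpart[symmetric] by (simp add: add.assoc)
    thus ?thesis unfolding Ps_def by (simp add: add.assoc)
  qed
  have bsEq: "matrix_inv (transpose D ** M ** D) ** transpose D ** M *v (x - xk) = bs (x - xk)" for x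
    unfolding bs_def Ai_def A_def N_def by (simp add: assoc)
  have C1: "Phi x (bs (x - xk)) \<le> Phi x \<beta>" for x \<beta>
    unfolding PhiEq ebs using e0[of x \<beta>] by (intro add_left_mono) simp
  have Psfin: "Ps x \<noteq> -\<infinity>" for x using g_proper unfolding proper_fun_def Ps_def by (cases "g x") auto
  have C2: "(\<exists>\<beta>. \<forall>x' \<beta>'. Phi x \<beta> \<le> Phi x' \<beta>') \<longleftrightarrow> (\<forall>x'. Ps x \<le> Ps x')" for x
  proof
    assume "\<exists>\<beta>. \<forall>x' \<beta>'. Phi x \<beta> \<le> Phi x' \<beta>'"
    then obtain \<beta> where h: "\<forall>x' \<beta>'. Phi x \<beta> \<le> Phi x' \<beta>'" by blast
    show "\<forall>x'. Ps x \<le> Ps x'"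
    proof
      fix x'
      have "Ps x + ereal C \<le> Phi x \<beta>" unfolding PhiEq using e0[of x \<beta>] by (intro add_left_mono) simp
      also have "\<dots> \<le> Phi x' (bs (x' - xk))" using h by blast
      also have "\<dots> = Ps x' + ereal C" unfolding PhiEq ebs by simp
      finally show "Ps x \<le> Ps x'" by (simp add: ereal_add_le_add_iff2)
    qed
  next
    assume h: "\<forall>x'. Ps x \<le> Ps x'"
    show "\<exists>\<beta>. \<forall>x' \<beta>'. Phi x \<beta> \<le> Phi x' \<beta>'"
    proof (intro exI allI)
      fix x' \<beta>'
      have "Phi x (bs (x - xk)) = Ps x + ereal C" unfolding PhiEq ebs by simp
      also have "\<dots> \<le> Ps x' + ereal C" using h by (intro add_right_mono) blast
      also have "\<dots> \<le> Phi x' \<beta>'" unfolding PhiEq using e0[of x' \<beta>'] by (intro add_left_mono) simp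
      finally show "Phi x (bs (x - xk)) \<le> Phi x' \<beta>'" .
    qed
  qed
  have rankK: "rank K = CARD('r)"
  proof -
    have bsD: "bs (D *v w) = w" for w unfolding bs_def using AAi Av Nv by (metis A_def assoc)
    have "range ((*v) K) = range ((*v) (transpose N))"
    proof
      show "range ((*v) K) \<subseteq> range ((*v) (transpose N))" using Kv NTv by (auto simp: image_iff)
      show "range ((*v) (transpose N)) \<subseteq> range ((*v) K)"
      proof
        fix z assume "z \<in> range ((*v) (transpose N))"
        then obtain w where "z = transpose N *v w" by blast
        hence "z = K *v (D *v w)" by (metis Kv NTv bsD)
        thus "z \<in> range ((*v) K)" by blast
      qed
    qed
    hence "rank K = rank (transpose N)" by (simp add: rank_dim_range)
    moreover have "inj ((*v) (transpose N))"
      unfolding matrix_left_invertible_injective[symmetric] matrix_left_invertible_ker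
      using NTv Minj Dinj by metis
    ultimately show ?thesis by (simp add: full_rank_injective)
  qed
  define Ti where "Ti = matrix_inv T"
  have invT: "invertible T" by (rule spd_inv[OF T_spd])
  have TTi: "T *v (Ti *v y) = y" for y using minv_v[OF invT] unfolding Ti_def by auto
  define W where "W = mat 1 - U ** Ti ** transpose U"
  have Wv: "W *v z = z - U *v (Ti *v (transpose U *v z))" for z
    unfolding W_def by (simp add: matrix_vector_mult_diff_rdistrib assoc)
  have QvK: "Q *v x = T *v x - transpose U *v (U *v x)" for x
    unfolding Q_def K_def by (simp add: matrix_vector_mult_diff_rdistrib assoc)
  have invW: "invertible W"
  proof (rule inv_of_ker, intro allI impI)
    fix z assume "W *v z = 0"
    hence zU: "z = U *v (Ti *v (transpose U *v z))" unfolding Wv by simp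
    define t where "t = Ti *v (transpose U *v z)"
    have "Q *v t = 0" unfolding QvK t_def using zU[symmetric] by (simp add: TTi t_def)
    hence "t = 0" by (rule Qinj)
    thus "z = 0" using zU unfolding t_def by simp
  qed
  define Wi where "Wi = matrix_inv W"
  have WWi: "W *v (Wi *v y) = y" for y using minv_v[OF invW] unfolding Wi_def by auto
  define R where "R = Ti + Ti ** transpose U ** Wi ** U ** Ti"
  have QR: "Q ** R = mat 1"
  proof -
    have "Q *v (R *v x) = x" for x
    proof -
      define a where "a = Ti *v x"
      define p where "p = Wi *v (U *v a)"
      have Rv: "R *v x = a + Ti *v (transpose U *v p)" unfolding R_def a_def p_def
        by (simp add: matrix_vector_mult_add_rdistrib assoc)
      have Wp: "p - U *v (Ti *v (transpose U *v p)) = U *v a" using WWi[of "U *v a"] unfolding Wv p_def by simp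
      have "Q *v (R *v x) = x + transpose U *v p - transpose U *v (U *v a)
          - transpose U *v (U *v (Ti *v (transpose U *v p)))"
        unfolding Rv QvK by (simp add: matrix_vector_right_distrib TTi a_def algebra_simps)
      also have "U *v (Ti *v (transpose U *v p)) = p - U *v a" using Wp by (simp add: algebra_simps)
      finally show ?thesis by (simp add: matrix_vector_mult_diff_distrib)
    qed
    thus ?thesis by (simp add: matrix_eq assoc)
  qed
  have QiR: "Qi = R"
  proof -
    have "Qi = Qi ** (Q ** R)" by (simp add: QR)
    also have "\<dots> = R" using minv[OF invQ] unfolding Qi_def by (simp add: matrix_mul_assoc)
    finally show ?thesis .
  qed
  have TH: "T - H = M" by (simp add: M_def)
  show ?thesis
    unfolding TH bsEq K_def[symmetric] Q_def[symmetric] Qi_def[symmetric] G_def[symmetric]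
      Ti_def[symmetric] W_def[symmetric] Wi_def[symmetric] R_def[symmetric]
    using C1 C2[unfolded Ps_def Psr_def] spdQ rankK invW QiR by blast
qed

end
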